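(* Let $G$ be a $2$-dc-semigroup. \begin{enumerate} \item The set $U_2=\{I_2(i,k): i\in\mathbf{N},\ k\in\mathbf{N}^*\}$, endowed with the operation \[ I_2(i,k)\cdot I_2(j,l)=\begin{cases} I_2(j,l) & \text{if } i=0 \text{ and } k=1,\\ I_2(i,k) & \text{if } j=0 \text{ and } l=1,\\ I_2(i+j,k+l) & \text{otherwise},\end{cases} \] is an abelian semigroup. \item If $i,j\in\mathbf{N}$, $k,l\in\mathbf{N}^*$, $I_2(i,k)\subseteq G$ and $I_2(j,l)\subseteq G$, then $I_2(i,k)\cdot I_2(j,l)\subseteq G$, where the product is the operation defined in (1). \end{enumerate}
   Context: $\mathbf{N}=\{0,1,2,\dots\}$ and $\mathbf{N}^*=\mathbf{N}\setminus\{0\}$. A $2$-dc-semigroup is a subsemigroup $G$ of the multiplicative semigroup $(\mathbf{N}^*,\cdot)$ which is closed with respect to the number of binary digits: if $x\in G$ and $2^{n-1}\le x<2^n$ then $\{y\in\mathbf{N}: 2^{n-1}\le y<2^n\}\subseteq G$. For $i\in\mathbf{N}$ and $j\in\mathbf{N}^*$, $I_2(i,j)=\{x\in\mathbf{N}: 2^i\le x<2^{i+j}\}$. *)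

theory Defs
  imports Main
begin

definition dc2_semigroup :: "nat set \<Rightarrow> bool" where
  "dc2_semigroup G \<longleftrightarrow>
     G \<subseteq> {x. x > 0} \<and>
     (\<forall>x\<in>G. \<forall>y\<in>G. x * y \<in> G) \<and>
     (\<forall>x\<in>G. \<forall>n. 2^(n-1) \<le> x \<and> x < 2^n \<longrightarrow> {y. 2^(n-1) \<le> y \<and> y < 2^n} \<subseteq> G)"

definition I2 :: "nat \<Rightarrow> nat \<Rightarrow> nat set" where
  "I2 i j = {x. 2^i \<le> x \<and> x < 2^(i+j)}"

definition U2 :: "nat set set" where
  "U2 = {I2 i k | i k. k \<ge> 1}"

text \<open>The operation on U2, defined on the sets via their (unique) index representation.\<close>
definition U2mult :: "nat set \<Rightarrow> nat set \<Rightarrow> nat set" where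
  "U2mult A B = (THE C. \<exists>i k j l. k \<ge> 1 \<and> l \<ge> 1 \<and> A = I2 i k \<and> B = I2 j l \<and>
      C = (if i = 0 \<and> k = 1 then I2 j l
           else if j = 0 \<and> l = 1 then I2 i k
           else I2 (i+j) (k+l)))"

end

theory Submission
  imports Defs
begin

definition hm :: "nat \<times> nat \<Rightarrow> nat \<times> nat \<Rightarrow> nat \<times> nat" where
  "hm x y = (if x = (0,1) then y else if y = (0,1) then x else (fst x + fst y, snd x + snd y))"

lemma I2_inj:
  assumes "k \<ge> 1" "k' \<ge> 1" "I2 i k = I2 i' k'"
  shows "i = i' \<and> k = k'"
proof -
  have a: "2^i \<in> I2 i k" "2^i' \<in> I2 i' k'" using assms(1,2)
    by (auto simp: I2_def)
  have "2^i \<in> I2 i' k'" "2^i' \<in> I2 i k" using a assms(3) by simp_all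
  hence "2^i' \<le> (2::nat)^i" "2^i \<le> (2::nat)^i'" unfolding I2_def by simp_all
  hence "i' \<le> i" "i \<le> i'" by (auto intro: power_le_imp_le_exp[of "2::nat"])
  hence ii: "i = i'" by simp
  have "(2::nat)^i < 2^(i+k)" "(2::nat)^i < 2^(i+k')" using assms(1,2) by auto
  hence "2^i \<le> (2::nat)^(i+k) - 1" "(2::nat)^(i+k) - 1 < 2^(i+k)"
     "2^i \<le> (2::nat)^(i+k') - 1" "(2::nat)^(i+k') - 1 < 2^(i+k')" by linarith+
  hence b: "2^(i+k) - 1 \<in> I2 i k" "2^(i+k') - 1 \<in> I2 i k'" unfolding I2_def by simp_all
  have "2^(i+k) - 1 \<in> I2 i k'" "2^(i+k') - 1 \<in> I2 i k" using b assms(3) ii by simp_all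
  hence "2^(i+k) - 1 < (2::nat)^(i+k')" "2^(i+k') - 1 < (2::nat)^(i+k)"
    unfolding I2_def by simp_all
  moreover have "(0::nat) < 2^(i+k)" "(0::nat) < 2^(i+k')" by simp_all
  ultimately have "(2::nat)^(i+k) \<le> 2^(i+k')" "(2::nat)^(i+k') \<le> 2^(i+k)" by linarith+
  hence "i+k \<le> i+k'" "i+k' \<le> i+k" by (auto intro: power_le_imp_le_exp[of "2::nat"])
  hence "i+k = i+k'" by simp
  thus ?thesis using ii by simp
qed

lemma U2mult_I2:
  assumes "k \<ge> 1" "l \<ge> 1"
  shows "U2mult (I2 i k) (I2 j l) = I2 (fst (hm (i,k) (j,l))) (snd (hm (i,k) (j,l)))"
  unfolding U2mult_def
proof (rule the_equality)
  show "\<exists>i' k' j' l'. k' \<ge> 1 \<and> l' \<ge> 1 \<and> I2 i k = I2 i' k' \<and> I2 j l = I2 j' l' \<and>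
      I2 (fst (hm (i,k) (j,l))) (snd (hm (i,k) (j,l))) = (if i' = 0 \<and> k' = 1 then I2 j' l'
           else if j' = 0 \<and> l' = 1 then I2 i' k'
           else I2 (i'+j') (k'+l'))"
    using assms by (intro exI[of _ i] exI[of _ k] exI[of _ j] exI[of _ l]) (auto simp: hm_def)
next
  fix C assume "\<exists>i' k' j' l'. k' \<ge> 1 \<and> l' \<ge> 1 \<and> I2 i k = I2 i' k' \<and> I2 j l = I2 j' l' \<and>
      C = (if i' = 0 \<and> k' = 1 then I2 j' l'
           else if j' = 0 \<and> l' = 1 then I2 i' k'
           else I2 (i'+j') (k'+l'))"
  then obtain i' k' j' l' where h: "k' \<ge> 1" "l' \<ge> 1" "I2 i k = I2 i' k'" "I2 j l = I2 j' l'"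
    "C = (if i' = 0 \<and> k' = 1 then I2 j' l'
           else if j' = 0 \<and> l' = 1 then I2 i' k'
           else I2 (i'+j') (k'+l'))" by blast
  have "i = i' \<and> k = k'" "j = j' \<and> l = l'" using I2_inj h assms by blast+
  thus "C = I2 (fst (hm (i,k) (j,l))) (snd (hm (i,k) (j,l)))" using h(5) by (auto simp: hm_def)
qed

lemma hm_pos: "snd x \<ge> 1 \<Longrightarrow> snd y \<ge> 1 \<Longrightarrow> snd (hm x y) \<ge> 1"
  by (auto simp: hm_def)

lemma hm_assoc: "snd x \<ge> 1 \<Longrightarrow> snd y \<ge> 1 \<Longrightarrow> snd z \<ge> 1 \<Longrightarrow> hm (hm x y) z = hm x (hm y z)"
  by (cases x; cases y; cases z) (auto simp: hm_def)

lemma hm_comm: "hm x y = hm y x"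
  by (cases x; cases y) (auto simp: hm_def)

lemma digit_class:
  assumes "2^m \<le> x" "x < (2::nat)^(m+d)"
  shows "\<exists>n. m < n \<and> n \<le> m+d \<and> 2^(n-1) \<le> x \<and> x < 2^n"
  using assms
proof (induction d)
  case 0 then show ?case by simp
next
  case (Suc d)
  show ?case
  proof (cases "x < 2^(m+d)")
    case True then show ?thesis using Suc by fastforce
  next
    case False then show ?thesis using Suc.prems
      by (intro exI[of _ "m + Suc d"]) auto
  qed
qed

lemma ineq4:
  assumes "(A::nat) \<ge> 4" "B \<ge> 4"
  shows "A * B \<le> 2 * ((A-1)*(B-1))"
proof -
  obtain a b where "A = a + 4" "B = b + 4" using assms by (metis add.commute le_Suc_ex)
  thus ?thesis by (simp add: algebra_simps)
qed

lemma part4: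
  assumes G: "dc2_semigroup G" and kl: "k \<ge> 1" "l \<ge> 1"
    and sub: "I2 i k \<subseteq> G" "I2 j l \<subseteq> G"
  shows "U2mult (I2 i k) (I2 j l) \<subseteq> G"
proof (cases "(i,k) = (0,1) \<or> (j,l) = (0,1)")
  case True then show ?thesis using sub kl by (auto simp: U2mult_I2 hm_def)
next
  case False
  hence eq: "U2mult (I2 i k) (I2 j l) = I2 (i+j) (k+l)" using kl by (auto simp: U2mult_I2 hm_def)
  have mul: "\<And>x y. x \<in> G \<Longrightarrow> y \<in> G \<Longrightarrow> x*y \<in> G" using G by (auto simp: dc2_semigroup_def)
  have cl: "\<And>z n y. z \<in> G \<Longrightarrow> 2^(n-1) \<le> z \<Longrightarrow> z < 2^n \<Longrightarrow> 2^(n-1) \<le> y \<Longrightarrow> y < 2^n \<Longrightarrow> y \<in> G"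
    using G unfolding dc2_semigroup_def by blast
  have ik2: "i + k \<ge> 2" and jl2: "j + l \<ge> 2" using False kl by auto
  have cls: "\<And>n. i+j < n \<Longrightarrow> n \<le> i+j+k+l \<Longrightarrow> \<exists>z\<in>G. 2^(n-1) \<le> z \<and> z < (2::nat)^n"
  proof -
    fix n assume n: "i+j < n" "n \<le> i+j+k+l"
    show "\<exists>z\<in>G. 2^(n-1) \<le> z \<and> z < (2::nat)^n"
    proof (cases "n = i+j+k+l")
      case True
      define A where "A = (2::nat)^(i+k)"
      define B where "B = (2::nat)^(j+l)"
      have "(2::nat)^2 \<le> 2^(i+k)" by (rule power_increasing) (use ik2 in auto)
      hence A4: "A \<ge> 4" unfolding A_def by simp
      have "(2::nat)^2 \<le> 2^(j+l)" by (rule power_increasing) (use jl2 in auto)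
      hence B4: "B \<ge> 4" unfolding B_def by simp
      have k1: "(2::nat)^i < 2^(i+k)" "(2::nat)^j < 2^(j+l)" using kl by auto
      have "2^i \<le> A - 1" "A - 1 < 2^(i+k)" using k1(1) unfolding A_def by linarith+
      hence inA: "A - 1 \<in> G" by (intro subsetD[OF sub(1)]) (auto simp: I2_def)
      have "2^j \<le> B - 1" "B - 1 < 2^(j+l)" using k1(2) unfolding B_def by linarith+
      hence inB: "B - 1 \<in> G" by (intro subsetD[OF sub(2)]) (auto simp: I2_def)
      have AB: "A * B = 2^n" unfolding A_def B_def True by (simp add: power_add[symmetric] algebra_simps)
      have n1: "(2::nat)^n = 2 * 2^(n-1)" using n by (metis Suc_diff_1 gr0I not_less0 power_Suc)
      have "2^(n-1) \<le> (A-1)*(B-1)" using ineq4[OF A4 B4] AB n1 by linarith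
      moreover have "(A-1)*(B-1) < 2^n"
      proof -
        have "(A-1)*(B-1) \<le> (A-1)*B" by simp
        also have "\<dots> < A*B" using A4 B4 by simp
        finally show ?thesis using AB by simp
      qed
      ultimately show ?thesis using mul[OF inA inB] by blast
    next
      case False
      define p where "p = min (n-1-j) (i+k-1)"
      define q where "q = n-1-p"
      have p: "i \<le> p" "p < i+k" "j \<le> q" "q < j+l" "p + q = n - 1"
        using n False kl unfolding p_def q_def by auto
      have "(2::nat)^p \<in> G" using p by (intro subsetD[OF sub(1)]) (auto simp: I2_def)
      moreover have "(2::nat)^q \<in> G" using p by (intro subsetD[OF sub(2)]) (auto simp: I2_def)
      ultimately have "(2::nat)^p * 2^q \<in> G" by (rule mul)
      hence "(2::nat)^(n-1) \<in> G" using p(5) by (simp add: power_add[symmetric])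
      moreover have "(2::nat)^(n-1) < 2^n" using n by simp
      ultimately show ?thesis by blast
    qed
  qed
  show ?thesis unfolding eq
  proof
    fix x assume "x \<in> I2 (i+j) (k+l)"
    hence "2^(i+j) \<le> x" "x < 2^(i+j+(k+l))" by (auto simp: I2_def)
    then obtain n where n: "i+j < n" "n \<le> i+j+(k+l)" "2^(n-1) \<le> x" "x < 2^n"
      using digit_class by blast
    then obtain z where "z \<in> G" "2^(n-1) \<le> z" "z < 2^n" using cls by fastforce
    thus "x \<in> G" using cl n by blast
  qed
qed

theorem lemma2p2:
  fixes G :: "nat set"
  assumes "dc2_semigroup G"
  shows "(\<forall>A\<in>U2. \<forall>B\<in>U2. U2mult A B \<in> U2)
    \<and> (\<forall>A\<in>U2. \<forall>B\<in>U2. \<forall>C\<in>U2. U2mult (U2mult A B) C = U2mult A (U2mult B C))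
    \<and> (\<forall>A\<in>U2. \<forall>B\<in>U2. U2mult A B = U2mult B A)
    \<and> (\<forall>i j k l. k \<ge> 1 \<longrightarrow> l \<ge> 1 \<longrightarrow> I2 i k \<subseteq> G \<longrightarrow> I2 j l \<subseteq> G
         \<longrightarrow> U2mult (I2 i k) (I2 j l) \<subseteq> G)"
proof (intro conjI ballI allI impI)
  fix A B assume "A \<in> U2" "B \<in> U2"
  then obtain i k j l where h: "k \<ge> 1" "l \<ge> 1" "A = I2 i k" "B = I2 j l" by (auto simp: U2_def)
  show "U2mult A B \<in> U2" unfolding h U2mult_I2[OF h(1,2)] U2_def
    using hm_pos[of "(i,k)" "(j,l)"] h by auto
  show "U2mult A B = U2mult B A" unfolding h U2mult_I2[OF h(1,2)] U2mult_I2[OF h(2,1)]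
    by (simp add: hm_comm)
next
  fix A B C assume "A \<in> U2" "B \<in> U2" "C \<in> U2"
  then obtain i k j l m r where h: "k \<ge> 1" "l \<ge> 1" "r \<ge> 1" "A = I2 i k" "B = I2 j l" "C = I2 m r"
    by (auto simp: U2_def)
  have p1: "snd (hm (i,k) (j,l)) \<ge> 1" "snd (hm (j,l) (m,r)) \<ge> 1" using hm_pos h by auto
  show "U2mult (U2mult A B) C = U2mult A (U2mult B C)"
    unfolding h U2mult_I2[OF h(1,2)] U2mult_I2[OF h(2,3)] U2mult_I2[OF p1(1) h(3)] U2mult_I2[OF h(1) p1(2)]
    using hm_assoc[of "(i,k)" "(j,l)" "(m,r)"] h by simp
next
  fix i j k l :: nat
  assume "k \<ge> 1" "l \<ge> 1" "I2 i k \<subseteq> G" "I2 j l \<subseteq> G"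
  thus "U2mult (I2 i k) (I2 j l) \<subseteq> G" using part4[OF assms] by blast
qed

end
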